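(* Let $(M,d)$ be a metric space, $\mathsf{P}\subseteq M$ a set of $n$ points, and $1\le\ell\le k\le n$ integers; put $m=\lfloor k/\ell\rfloor$. Let $c\ge1$ and let $Q=\{q_1,\dots,q_m\}\subseteq\mathsf{P}$ be a $c$-approximate solution to the (non-fault-tolerant) $m$-center problem on $\mathsf{P}$, i.e. $\max_{p\in\mathsf{P}} d_Q(p,1)\le c\, r_{\mathrm{cen}}$ where $r_{\mathrm{cen}}=\min_{S\subseteq\mathsf{P},|S|=m}\max_{p\in\mathsf{P}} d_S(p,1)$. Let $C\subseteq\mathsf{P}$ be any set with $|C|=k$ and $C\supseteq\bigcup_{i=1}^m N_{\mathsf{P}}(q_i,\ell)$. Then $$\max_{p\in\mathsf{P}} d_C(p,\ell)\le (1+2c)\,r_{\mathrm{opt}},\qquad\text{where } r_{\mathrm{opt}}=\min_{C'\subseteq\mathsf{P},|C'|=k}\max_{p\in\mathsf{P}} d_{C'}(p,\ell).$$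
   Context: For a finite set $S\subseteq M$, a point $p\in M$ and an integer $1\le i\le|S|$, $d_S(p,i)$ denotes the radius of the smallest closed ball centered at $p$ containing at least $i$ points of $S$. The $i$ nearest neighbors of $p$ in $S$ are determined by ordering $s\in S$ lexicographically by $(d(p,s),\text{index of }s)$ (points of $\mathsf{P}=\{p_1,\dots,p_n\}$ are indexed); $N_S(p,i)$ is the set of the first $i$ points in this order, so $|N_S(p,i)|=i$. The fault-tolerant $k$-center cost of $C$ is $\max_{p\in\mathsf{P}} d_C(p,\ell)$; $\ell=1$ is ordinary $k$-center. *)

theory Defs
  imports "HOL-Analysis.Analysis"
begin

definition kdist :: "'a::metric_space set \<Rightarrow> 'a \<Rightarrow> nat \<Rightarrow> real" where
  "kdist S p i = Inf {r. i \<le> card {s \<in> S. dist p s \<le> r}}"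

definition nn_less :: "('a \<Rightarrow> nat) \<Rightarrow> 'a::metric_space \<Rightarrow> 'a \<Rightarrow> 'a \<Rightarrow> bool" where
  "nn_less idx p t s \<longleftrightarrow> dist p t < dist p s \<or> (dist p t = dist p s \<and> idx t < idx s)"

text \<open>N_S(p,i): the first i points of S in this order.\<close>
definition NN :: "('a \<Rightarrow> nat) \<Rightarrow> 'a::metric_space set \<Rightarrow> 'a \<Rightarrow> nat \<Rightarrow> 'a set" where
  "NN idx S p i = {s \<in> S. card {t \<in> S. nn_less idx p t s} < i}"

definition ft_cost :: "'a::metric_space set \<Rightarrow> 'a set \<Rightarrow> nat \<Rightarrow> real" where
  "ft_cost P C l = Max ((\<lambda>p. kdist C p l) ` P)"

definition ft_opt :: "'a::metric_space set \<Rightarrow> nat \<Rightarrow> nat \<Rightarrow> real" where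
  "ft_opt P k l = Min {ft_cost P C' l | C'. C' \<subseteq> P \<and> card C' = k}"

end

theory Submission
  imports Defs
begin

lemma kdist_le:
  assumes "1 \<le> i" "i \<le> card {s\<in>S. dist p s \<le> r}"
  shows "kdist S p i \<le> r"
proof -
  have bdd: "bdd_below {r. i \<le> card {s\<in>S. dist p s \<le> r}}"
  proof (rule bdd_belowI[where m=0])
    fix x assume "x \<in> {r. i \<le> card {s\<in>S. dist p s \<le> r}}"
    then have "card {s\<in>S. dist p s \<le> x} \<noteq> 0" using assms by auto
    then obtain s where "dist p s \<le> x" by (metis (no_types, lifting) card.empty empty_Collect_eq)
    then show "0 \<le> x" using zero_le_dist[of p s] by linarith
  qed
  show ?thesis unfolding kdist_def by (rule cInf_lower[OF _ bdd]) (use assms in auto)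
qed

lemma kdist_attained:
  assumes "finite S" "1 \<le> i" "i \<le> card S"
  shows "i \<le> card {s\<in>S. dist p s \<le> kdist S p i}"
proof -
  define A where "A = {r. i \<le> card {s\<in>S. dist p s \<le> r}}"
  define \<rho> where "\<rho> = Inf A"
  have \<rho>: "\<rho> = kdist S p i" unfolding \<rho>_def A_def kdist_def by simp
  have Sne: "S \<noteq> {}" using assms by auto
  have "Max (dist p ` S) \<in> A"
  proof -
    have "{s\<in>S. dist p s \<le> Max (dist p ` S)} = S" using assms(1) by auto
    then show ?thesis unfolding A_def using assms by simp
  qed
  then have Ane: "A \<noteq> {}" by auto
  have bdd: "bdd_below A"
  proof (rule bdd_belowI[where m=0])
    fix x assume "x \<in> A"
    then have "card {s\<in>S. dist p s \<le> x} \<noteq> 0" using assms unfolding A_def by (simp del: card_0_eq)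
    then obtain s where "dist p s \<le> x" by (metis (no_types, lifting) card.empty empty_Collect_eq)
    then show "0 \<le> x" using zero_le_dist[of p s] by linarith
  qed
  have above: "r \<in> A" if "r > \<rho>" for r
  proof -
    have "Inf A < r" using that unfolding \<rho>_def .
    then obtain a where a: "a \<in> A" "a < r" using cInf_less_iff[OF Ane bdd] by blast
    have "{s\<in>S. dist p s \<le> a} \<subseteq> {s\<in>S. dist p s \<le> r}" using a by auto
    then have "card {s\<in>S. dist p s \<le> a} \<le> card {s\<in>S. dist p s \<le> r}"
      using assms(1) by (intro card_mono) auto
    then show ?thesis using a unfolding A_def by auto
  qed
  define D where "D = {d \<in> dist p ` S. d > \<rho>}"
  have finD: "finite D" unfolding D_def using assms(1) by auto
  define r1 where "r1 = (if D = {} then \<rho> + 1 else Min D)"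
  have r1: "r1 > \<rho>" unfolding r1_def using finD by (auto simp: D_def)
  define r' where "r' = (\<rho> + r1) / 2"
  have "r' > \<rho>" "r' < r1" using r1 unfolding r'_def by auto
  then have "r' \<in> A" using above by auto
  moreover have "{s\<in>S. dist p s \<le> r'} \<subseteq> {s\<in>S. dist p s \<le> \<rho>}"
  proof clarify
    fix s assume s: "s \<in> S" "dist p s \<le> r'"
    show "dist p s \<le> \<rho>"
    proof (rule ccontr)
      assume "\<not> dist p s \<le> \<rho>"
      then have "dist p s \<in> D" unfolding D_def using s by auto
      then have "r1 \<le> dist p s" unfolding r1_def using finD by auto
      then show False using s \<open>r' < r1\<close> by linarith
    qed
  qed
  then have "card {s\<in>S. dist p s \<le> r'} \<le> card {s\<in>S. dist p s \<le> \<rho>}"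
    using assms(1) by (intro card_mono) auto
  ultimately show ?thesis unfolding A_def \<rho> by auto
qed

lemma card_NN:
  assumes "finite P" "inj_on idx P" "l \<le> card P"
  shows "card (NN idx P q l) = l"
proof -
  define lt where "lt t s = nn_less idx q t s" for t s
  define rank where "rank s = card {t\<in>P. lt t s}" for s
  have irr: "\<not> lt s s" for s unfolding lt_def nn_less_def by auto
  have tr: "lt a b \<Longrightarrow> lt b c \<Longrightarrow> lt a c" for a b c unfolding lt_def nn_less_def by auto
  have tot: "s \<in> P \<Longrightarrow> t \<in> P \<Longrightarrow> s \<noteq> t \<Longrightarrow> lt s t \<or> lt t s" for s t
    using assms(2) unfolding lt_def nn_less_def inj_on_def by (metis linorder_neqE_linordered_idom nat_neq_iff)
  have less: "rank t < rank s" if "t \<in> P" "lt t s" for t s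
  proof -
    have "{u\<in>P. lt u t} \<subseteq> {u\<in>P. lt u s}" using that tr by auto
    moreover have "t \<in> {u\<in>P. lt u s}" "t \<notin> {u\<in>P. lt u t}" using that irr by auto
    ultimately have "{u\<in>P. lt u t} \<subset> {u\<in>P. lt u s}" by blast
    then show ?thesis unfolding rank_def using assms(1) by (intro psubset_card_mono) auto
  qed
  have inj: "inj_on rank P"
  proof (rule inj_onI, rule ccontr)
    fix s t assume "s \<in> P" "t \<in> P" "rank s = rank t" "s \<noteq> t"
    then show False using tot less by (metis less_irrefl)
  qed
  have sub: "rank ` P \<subseteq> {..<card P}"
  proof
    fix x assume "x \<in> rank ` P"
    then obtain s where s: "s \<in> P" "x = rank s" by auto
    have "{t\<in>P. lt t s} \<subset> P" using s irr by auto
    then show "x \<in> {..<card P}" unfolding s rank_def using assms(1) by (auto intro: psubset_card_mono)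
  qed
  have img: "rank ` P = {..<card P}"
    using card_subset_eq[OF _ sub] card_image[OF inj] by auto
  have NN: "NN idx P q l = {s\<in>P. rank s < l}" unfolding NN_def rank_def lt_def by simp
  have "rank ` {s\<in>P. rank s < l} = {..<l}"
  proof
    show "rank ` {s\<in>P. rank s < l} \<subseteq> {..<l}" by auto
    show "{..<l} \<subseteq> rank ` {s\<in>P. rank s < l}"
    proof
      fix x assume "x \<in> {..<l}"
      then have "x \<in> rank ` P" using img assms(3) by auto
      then show "x \<in> rank ` {s\<in>P. rank s < l}" using \<open>x \<in> {..<l}\<close> by auto
    qed
  qed
  moreover have "inj_on rank {s\<in>P. rank s < l}" using inj by (rule inj_on_subset) auto
  ultimately show ?thesis unfolding NN by (metis card_image card_lessThan)
qed

lemma NN_close: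
  assumes "finite P" "1 \<le> l" "l \<le> card P" "s \<in> NN idx P q l"
  shows "dist q s \<le> kdist P q l"
proof (rule ccontr)
  assume a: "\<not> dist q s \<le> kdist P q l"
  have "{t\<in>P. dist q t \<le> kdist P q l} \<subseteq> {t\<in>P. nn_less idx q t s}"
    using a unfolding nn_less_def by auto
  then have "card {t\<in>P. dist q t \<le> kdist P q l} \<le> card {t\<in>P. nn_less idx q t s}"
    using assms(1) by (intro card_mono) auto
  moreover have "l \<le> card {t\<in>P. dist q t \<le> kdist P q l}" using kdist_attained assms by blast
  ultimately show False using assms(4) unfolding NN_def by auto
qed

theorem theorem2:
  fixes P Q C :: "'a::metric_space set" and idx :: "'a \<Rightarrow> nat"
    and l k :: nat and c :: real
  assumes "finite P" and "inj_on idx P"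
    and "1 \<le> l" and "l \<le> k" and "k \<le> card P"
    and "c \<ge> 1"
    and "Q \<subseteq> P" and "card Q = k div l"
    and "ft_cost P Q 1 \<le> c * ft_opt P (k div l) 1"
    and "C \<subseteq> P" and "card C = k"
    and "(\<Union>q\<in>Q. NN idx P q l) \<subseteq> C"
  shows "ft_cost P C l \<le> (1 + 2 * c) * ft_opt P k l"
proof -
  define m where "m = k div l"
  define r where "r = ft_opt P k l"
  have Pne: "P \<noteq> {}" using assms(3,4,5) by auto
  have m1: "1 \<le> m" unfolding m_def using div_le_mono[OF assms(4), of l] assms(3) by simp
  have mk: "m \<le> k" unfolding m_def by simp
  have finsub: "finite {ft_cost P C' j | C'. C' \<subseteq> P \<and> card C' = n}" for j n
  proof -
    have e: "{ft_cost P C' j | C'. C' \<subseteq> P \<and> card C' = n} = (\<lambda>C'. ft_cost P C' j) ` {C'. C' \<subseteq> P \<and> card C' = n}" by blast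
    have "{C'. C' \<subseteq> P \<and> card C' = n} \<subseteq> Pow P" by blast
    then have "finite {C'. C' \<subseteq> P \<and> card C' = n}" using assms(1) finite_subset by blast
    then show ?thesis unfolding e by (rule finite_imageI)
  qed
  have nesub: "{ft_cost P C' j | C'. C' \<subseteq> P \<and> card C' = n} \<noteq> {}" if nP: "n \<le> card P" for j n
  proof -
    obtain S where S: "S \<subseteq> P" "card S = n" using obtain_subset_with_card_n[OF nP] by metis
    then have "ft_cost P S j \<in> {ft_cost P C' j | C'. C' \<subseteq> P \<and> card C' = n}" by blast
    then show ?thesis by blast
  qed
  have "r \<in> {ft_cost P C' l | C'. C' \<subseteq> P \<and> card C' = k}"
    unfolding r_def ft_opt_def by (rule Min_in[OF finsub nesub[OF assms(5)]])
  then obtain Cs where Cs: "Cs \<subseteq> P" "card Cs = k" "ft_cost P Cs l = r" by blast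
  have finCs: "finite Cs" using Cs(1) assms(1) finite_subset by blast
  have ballCs: "l \<le> card {s\<in>Cs. dist p s \<le> r}" if "p \<in> P" for p
  proof -
    have "kdist Cs p l \<le> r" unfolding Cs(3)[symmetric] ft_cost_def
      using assms(1) that by (intro Max_ge) simp_all
    moreover have "l \<le> card {s\<in>Cs. dist p s \<le> kdist Cs p l}"
      using kdist_attained[OF finCs assms(3)] Cs assms by auto
    moreover have "card {s\<in>Cs. dist p s \<le> kdist Cs p l} \<le> card {s\<in>Cs. dist p s \<le> r}"
      using finCs calculation(1) by (intro card_mono) auto
    ultimately show ?thesis by linarith
  qed
  have r0: "0 \<le> r"
  proof -
    obtain p where "p \<in> P" using Pne by auto
    then have "l \<le> card {s\<in>Cs. dist p s \<le> r}" by (rule ballCs)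
    then have "card {s\<in>Cs. dist p s \<le> r} \<noteq> 0" using assms(3) by linarith
    then obtain s where "dist p s \<le> r" by (metis (no_types, lifting) card.empty empty_Collect_eq)
    then show ?thesis using zero_le_dist[of p s] by linarith
  qed
  have A: "kdist P q l \<le> r" if "q \<in> P" for q
  proof (rule kdist_le[OF assms(3)])
    have "card {s\<in>Cs. dist q s \<le> r} \<le> card {s\<in>P. dist q s \<le> r}"
      using Cs(1) assms(1) by (intro card_mono) auto
    then show "l \<le> card {s\<in>P. dist q s \<le> r}" using ballCs[OF that] by linarith
  qed
  define F where "F = {T. T \<subseteq> P \<and> (\<forall>x\<in>T. \<forall>y\<in>T. x \<noteq> y \<longrightarrow> dist x y > 2 * r)}"
  have "F \<subseteq> Pow P" unfolding F_def by blast
  then have finF: "finite F" using assms(1) finite_subset by blast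
  have "{} \<in> F" unfolding F_def by auto
  then have "card ` F \<noteq> {}" by auto
  then have "Max (card ` F) \<in> card ` F" using finF by (intro Max_in) auto
  then obtain T where T: "T \<in> F" "card T = Max (card ` F)" by (metis imageE)
  have maxT: "card T' \<le> card T" if "T' \<in> F" for T' using T(2) finF that by auto
  have TP: "T \<subseteq> P" using T(1) unfolding F_def by blast
  have finT: "finite T" using TP assms(1) finite_subset by blast
  have cover: "\<exists>t\<in>T. dist p t \<le> 2 * r" if "p \<in> P" for p
  proof (rule ccontr)
    assume na: "\<not> ?thesis"
    have "p \<notin> T"
    proof
      assume "p \<in> T"
      moreover have "dist p p \<le> 2 * r" using r0 by simp
      ultimately show False using na by blast
    qed
    have "insert p T \<in> F" using T(1) na that unfolding F_def by (auto simp: dist_commute)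
    then have "card (insert p T) \<le> card T" by (rule maxT)
    then show False using \<open>p \<notin> T\<close> finT by simp
  qed
  define B where "B t = {s\<in>Cs. dist t s \<le> r}" for t
  have disj: "disjoint_family_on B T"
  unfolding disjoint_family_on_def
  proof (intro ballI impI)
    fix t t' assume tt: "t \<in> T" "t' \<in> T" "t \<noteq> t'"
    then have far: "dist t t' > 2 * r" using T(1) unfolding F_def by auto
    show "B t \<inter> B t' = {}"
    proof (rule ccontr)
      assume "B t \<inter> B t' \<noteq> {}"
      then obtain s where "dist t s \<le> r" "dist t' s \<le> r" unfolding B_def by auto
      then have "dist t t' \<le> 2 * r" using dist_triangle2[of t t' s] by linarith
      then show False using far by linarith
    qed
  qed
  have "card T * l = (\<Sum>t\<in>T. l)" by simp
  also have "\<dots> \<le> (\<Sum>t\<in>T. card (B t))"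
    using ballCs TP unfolding B_def by (intro sum_mono) auto
  also have "\<dots> = card (\<Union>t\<in>T. B t)"
  proof (rule card_UN_disjoint[OF finT, symmetric])
    show "\<forall>i\<in>T. finite (B i)" using finCs unfolding B_def by auto
    show "\<forall>i\<in>T. \<forall>j\<in>T. i \<noteq> j \<longrightarrow> B i \<inter> B j = {}" using disj unfolding disjoint_family_on_def by blast
  qed
  also have "\<dots> \<le> card Cs" using finCs unfolding B_def by (intro card_mono) auto
  finally have "card T * l \<le> k" using Cs by simp
  then have cardT: "card T \<le> m" unfolding m_def using assms(3)
    by (simp add: less_eq_div_iff_mult_less_eq)
  have mT: "m - card T \<le> card (P - T)" using card_Diff_subset[OF finT TP] mk assms(5) cardT by linarith
  obtain U where U: "U \<subseteq> P - T" "card U = m - card T" using obtain_subset_with_card_n[OF mT] by metis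
  define T' where "T' = T \<union> U"
  have T'P: "T' \<subseteq> P" using U TP unfolding T'_def by auto
  have finU: "finite U" using U(1) assms(1) finite_subset by blast
  have "T \<inter> U = {}" using U(1) by blast
  then have cardT': "card T' = m" unfolding T'_def using card_Un_disjoint[OF finT finU] U(2) cardT by simp
  have "ft_cost P T' 1 \<le> 2 * r" unfolding ft_cost_def
  proof (subst Max_le_iff)
    show "finite ((\<lambda>p. kdist T' p 1) ` P)" using assms(1) by simp
    show "(\<lambda>p. kdist T' p 1) ` P \<noteq> {}" using Pne by simp
    show "\<forall>a\<in>(\<lambda>p. kdist T' p 1) ` P. a \<le> 2 * r"
    proof clarify
      fix p assume "p \<in> P"
      then obtain t where t: "t \<in> T" "dist p t \<le> 2 * r" using cover by auto
      have finT': "finite T'" using T'P assms(1) finite_subset by auto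
      have "{s\<in>T'. dist p s \<le> 2 * r} \<noteq> {}" using t unfolding T'_def by auto
      then have "1 \<le> card {s\<in>T'. dist p s \<le> 2 * r}" using finT'
        by (simp add: Suc_le_eq card_gt_0_iff)
      then show "kdist T' p 1 \<le> 2 * r" by (rule kdist_le[OF order_refl])
    qed
  qed
  moreover have "ft_opt P m 1 \<le> ft_cost P T' 1"
    unfolding ft_opt_def using T'P cardT' by (intro Min_le[OF finsub]) blast
  ultimately have Dm: "ft_opt P m 1 \<le> 2 * r" by linarith
  have finQ: "finite Q" using assms(1,7) finite_subset by blast
  have main: "kdist C p l \<le> (1 + 2 * c) * r" if p: "p \<in> P" for p
  proof -
    have "1 \<le> card {s\<in>Q. dist p s \<le> kdist Q p 1}"
      using kdist_attained[OF finQ order_refl] m1 assms(8) unfolding m_def by auto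
    then obtain q where q: "q \<in> Q" "dist p q \<le> kdist Q p 1"
      by (metis (no_types, lifting) Collect_empty_eq card.empty not_one_le_zero)
    have "kdist Q p 1 \<le> ft_cost P Q 1" unfolding ft_cost_def using p assms(1) by (intro Max_ge) simp_all
    also have "\<dots> \<le> c * ft_opt P m 1" using assms(9) unfolding m_def .
    also have "\<dots> \<le> c * (2 * r)" using Dm assms(6) by (intro mult_left_mono) auto
    finally have dq: "dist p q \<le> 2 * c * r" using q by linarith
    have qP: "q \<in> P" using q assms(7) by auto
    have lP: "l \<le> card P" using assms by linarith
    have "NN idx P q l \<subseteq> {s\<in>C. dist p s \<le> dist p q + kdist P q l}"
    proof
      fix s assume s: "s \<in> NN idx P q l"
      have "dist q s \<le> kdist P q l" by (rule NN_close[OF assms(1,3) lP s])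
      moreover have "s \<in> C" using s q assms(12) by auto
      ultimately show "s \<in> {s\<in>C. dist p s \<le> dist p q + kdist P q l}"
        using dist_triangle[of p s q] by auto
    qed
    then have "card (NN idx P q l) \<le> card {s\<in>C. dist p s \<le> dist p q + kdist P q l}"
    proof -
      have "finite C" using assms(1,10) finite_subset by blast
      then have "finite {s\<in>C. dist p s \<le> dist p q + kdist P q l}" by simp
      then show ?thesis using \<open>NN idx P q l \<subseteq> _\<close> by (rule card_mono)
    qed
    then have "kdist C p l \<le> dist p q + kdist P q l"
      using card_NN[OF assms(1,2) lP] by (intro kdist_le[OF assms(3)]) auto
    also have "\<dots> \<le> 2 * c * r + r" using dq A[OF qP] by linarith
    finally show ?thesis by (simp add: algebra_simps)
  qed
  show ?thesis unfolding ft_cost_def r_def[symmetric]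
    using main assms(1) Pne by (subst Max_le_iff) auto
qed

end
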